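(* Let $d\ge2$, $\gamma\ge2d$, $v\in\mathcal R_\infty^{(\gamma)}$, and let $h\in\ell^\infty(\mathbb Z^d,\mathbb Z)$ satisfy $M_h:=\max_{\mathbf m}h_{\mathbf m}>0$ and $v+f^{(d,\gamma)}\cdot h\in\mathcal R^{(\gamma)}_\infty$. Then every connected component of $\mathcal S_{\max}(h)=\{\mathbf n\in\mathbb Z^d:h_{\mathbf n}=M_h\}$ is infinite.
   Context: $f^{(d,\gamma)}=\gamma-\sum_{i=1}^d(u_i+u_i^{-1})$, acting on $h\in\ell^\infty(\mathbb Z^d,\mathbb Z)$ by $(f^{(d,\gamma)}\cdot h)_{\mathbf n}=\gamma h_{\mathbf n}-\sum_i(h_{\mathbf n+\mathbf e^{(i)}}+h_{\mathbf n-\mathbf e^{(i)}})$. For nonempty $F\subset\mathbb Z^d$, $\mathsf N_F(\mathbf n)=|F\cap\{\mathbf n\pm\mathbf e^{(i)}\}|$. $\mathcal R^{(\gamma)}_\infty=\{v\in\{0,\dots,\gamma-1\}^{\mathbb Z^d}:$ for every finite nonempty $F\subset\mathbb Z^d$ there is $\mathbf n\in F$ with $v_{\mathbf n}\ge\mathsf N_F(\mathbf n)\}$. A set $S\subset\mathbb Z^d$ is connected if any two points of $S$ are joined by a path $p(0),\dots,p(k)$ in $S$ with $\|p(j)-p(j-1)\|_{\max}=1$. *)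

theory Defs
  imports Main
begin

text \<open>Points of Z^d are represented as functions nat => int vanishing at all
indices >= d. Configurations are functions on such points; only their values
on the lattice matter.\<close>

type_synonym pt = "nat \<Rightarrow> int"

definition lattice :: "nat \<Rightarrow> pt set" where
  "lattice d = {n. \<forall>i\<ge>d. n i = 0}"

definition unitv :: "nat \<Rightarrow> pt" where
  "unitv i = (\<lambda>j. if j = i then 1 else 0)"

definition shift :: "pt \<Rightarrow> int \<Rightarrow> nat \<Rightarrow> pt" where
  "shift n s i = (\<lambda>j. n j + s * unitv i j)"

definition bounded_conf :: "nat \<Rightarrow> (pt \<Rightarrow> int) \<Rightarrow> bool" where
  "bounded_conf d h \<longleftrightarrow> (\<exists>B. \<forall>n\<in>lattice d. \<bar>h n\<bar> \<le> B)"

text \<open>Action of f^(d,gamma) = gamma - sum_i (u_i + u_i^-1).\<close>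
definition f_act :: "nat \<Rightarrow> int \<Rightarrow> (pt \<Rightarrow> int) \<Rightarrow> pt \<Rightarrow> int" where
  "f_act d \<gamma> h n = \<gamma> * h n - (\<Sum>i<d. h (shift n 1 i) + h (shift n (-1) i))"

definition nbrs :: "nat \<Rightarrow> pt \<Rightarrow> pt set" where
  "nbrs d n = {shift n 1 i | i. i < d} \<union> {shift n (-1) i | i. i < d}"

definition NF :: "nat \<Rightarrow> pt set \<Rightarrow> pt \<Rightarrow> nat" where
  "NF d F n = card (F \<inter> nbrs d n)"

definition R_inf :: "nat \<Rightarrow> int \<Rightarrow> (pt \<Rightarrow> int) set" where
  "R_inf d \<gamma> = {v. (\<forall>n\<in>lattice d. 0 \<le> v n \<and> v n \<le> \<gamma> - 1) \<and>
     (\<forall>F. F \<subseteq> lattice d \<and> finite F \<and> F \<noteq> {} \<longrightarrow> (\<exists>n\<in>F. v n \<ge> int (NF d F n)))}"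

definition Mh :: "nat \<Rightarrow> (pt \<Rightarrow> int) \<Rightarrow> int" where
  "Mh d h = Max (h ` lattice d)"

definition Smax :: "nat \<Rightarrow> (pt \<Rightarrow> int) \<Rightarrow> pt set" where
  "Smax d h = {n \<in> lattice d. h n = Mh d h}"

definition adj_in :: "pt set \<Rightarrow> pt \<Rightarrow> pt \<Rightarrow> bool" where
  "adj_in S p q \<longleftrightarrow> p \<in> S \<and> q \<in> S \<and> p \<noteq> q \<and> (\<forall>i. \<bar>p i - q i\<bar> \<le> 1)"

definition component :: "pt set \<Rightarrow> pt \<Rightarrow> pt set" where
  "component S x = {y. (adj_in S)\<^sup>*\<^sup>* x y}"

end

theory Submission
  imports Defs
begin

lemma shift_app: "shift n s i j = n j + (if j = i then s else 0)"
  by (simp add: shift_def unitv_def)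

lemma shift_inj: "shift n s i = shift n s i' \<Longrightarrow> s \<noteq> 0 \<Longrightarrow> i = i'"
proof (rule ccontr)
  assume e: "shift n s i = shift n s i'" and s: "s \<noteq> 0" and ne: "i \<noteq> i'"
  from e have "shift n s i i = shift n s i' i" by simp
  with s ne show False by (simp add: shift_app)
qed

lemma shift_ne: "shift n 1 i \<noteq> shift n (-1) i'"
proof
  assume "shift n 1 i = shift n (-1) i'"
  hence "shift n 1 i i = shift n (-1) i' i" by simp
  thus False by (simp add: shift_app split: if_splits)
qed

lemma shift_lat: "n \<in> lattice d \<Longrightarrow> i < d \<Longrightarrow> shift n s i \<in> lattice d"
  by (simp add: lattice_def shift_app)

lemma shift_adj: "n \<in> S \<Longrightarrow> shift n s i \<in> S \<Longrightarrow> \<bar>s\<bar> = 1 \<Longrightarrow> adj_in S n (shift n s i)"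
  unfolding adj_in_def
proof (intro conjI allI)
  assume "\<bar>s\<bar> = 1"
  show "n \<noteq> shift n s i"
  proof
    assume "n = shift n s i"
    hence "n i = shift n s i i" by simp
    with \<open>\<bar>s\<bar> = 1\<close> show False by (simp add: shift_app)
  qed
  fix j show "\<bar>n j - shift n s i j\<bar> \<le> 1" using \<open>\<bar>s\<bar> = 1\<close> by (simp add: shift_app)
qed auto

lemma comp_sub: "x \<in> S \<Longrightarrow> y \<in> component S x \<Longrightarrow> y \<in> S"
  unfolding component_def
proof -
  assume "x \<in> S" "y \<in> {y. (adj_in S)\<^sup>*\<^sup>* x y}"
  hence "(adj_in S)\<^sup>*\<^sup>* x y" by simp
  thus "y \<in> S" using \<open>x \<in> S\<close> by (induction rule: rtranclp_induct) (auto simp: adj_in_def)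
qed

lemma comp_step: "y \<in> component S x \<Longrightarrow> adj_in S y z \<Longrightarrow> z \<in> component S x"
  unfolding component_def by (auto intro: rtranclp.rtrancl_into_rtrancl)

lemma sum_ind: "(\<Sum>i<(d::nat). (if P i then 1 else 0) :: int) = int (card {i\<in>{..<d}. P i})"
proof -
  have "(\<Sum>i\<in>{i\<in>{..<d}. P i}. (1::int)) = (\<Sum>i<d. (if P i then 1 else 0))"
    using sum.inter_filter[of "{..<d}" "\<lambda>_. (1::int)" P] by simp
  thus ?thesis by simp
qed

theorem corollary4p2:
  fixes d :: nat and \<gamma> :: int and v h :: "pt \<Rightarrow> int"
  assumes "d \<ge> 2" and "\<gamma> \<ge> 2 * int d"
    and "v \<in> R_inf d \<gamma>"
    and "bounded_conf d h"
    and "Mh d h > 0"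
    and "(\<lambda>n. v n + f_act d \<gamma> h n) \<in> R_inf d \<gamma>"
  shows "\<forall>x\<in>Smax d h. infinite (component (Smax d h) x)"
proof (intro ballI notI)
  fix x assume xS: "x \<in> Smax d h" and fin: "finite (component (Smax d h) x)"
  define S where "S = Smax d h"
  define C where "C = component S x"
  define M where "M = Mh d h"
  obtain B where B: "\<forall>n\<in>lattice d. \<bar>h n\<bar> \<le> B" using assms(4) bounded_conf_def by blast
  have "h ` lattice d \<subseteq> {-B..B}" using B by (auto simp: abs_le_iff)
  hence finI: "finite (h ` lattice d)" by (rule finite_subset) simp
  have hle: "h m \<le> M" if "m \<in> lattice d" for m
    unfolding M_def Mh_def using finI that by simp
  have xC: "x \<in> C" unfolding C_def component_def by simp
  have CS: "C \<subseteq> S" using comp_sub xS unfolding C_def S_def by blast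
  have CL: "C \<subseteq> lattice d" using CS unfolding S_def Smax_def by auto
  have hC: "h m = M" if "m \<in> C" for m using CS that unfolding S_def Smax_def M_def by auto
  have Rv: "\<forall>F. F \<subseteq> lattice d \<and> finite F \<and> F \<noteq> {} \<longrightarrow> (\<exists>n\<in>F. v n \<ge> int (NF d F n))"
    using conjunct2[OF assms(3)[unfolded R_inf_def mem_Collect_eq]] .
  have Cne: "C \<noteq> {}" using xC by blast
  have finC: "finite C" using fin unfolding C_def S_def .
  have "\<exists>n\<in>C. v n \<ge> int (NF d C n)" using Rv CL finC Cne by blast
  then obtain n where nC: "n \<in> C" and vn: "v n \<ge> int (NF d C n)" by blast
  have nL: "n \<in> lattice d" using nC CL by auto
  have bnd: "h (shift n s i) \<le> M - 1 + (if shift n s i \<in> C then 1 else 0)"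
    if "i < d" "\<bar>s\<bar> = 1" for s i
  proof (cases "shift n s i \<in> C")
    case True thus ?thesis using hC by simp
  next
    case False
    have L: "shift n s i \<in> lattice d" using shift_lat nL that by blast
    have "shift n s i \<notin> S"
    proof
      assume "shift n s i \<in> S"
      hence "adj_in S n (shift n s i)" using shift_adj CS nC that by blast
      hence "shift n s i \<in> C" using comp_step nC unfolding C_def by blast
      with False show False by simp
    qed
    hence "h (shift n s i) \<noteq> M" using L unfolding S_def Smax_def M_def by auto
    with hle[OF L] False show ?thesis by simp
  qed
  define A where "A = {i\<in>{..<d}. shift n 1 i \<in> C}"
  define A' where "A' = {i\<in>{..<d}. shift n (-1) i \<in> C}"
  have sumb: "(\<Sum>i<d. h (shift n 1 i) + h (shift n (-1) i))
      \<le> (\<Sum>i<d. (M - 1 + (if shift n 1 i \<in> C then 1 else 0)) + (M - 1 + (if shift n (-1) i \<in> C then 1 else 0)))"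
    using bnd[of _ 1] bnd[of _ "-1"] by (intro sum_mono add_mono) auto
  also have "\<dots> = (\<Sum>i<d. (2*M - 2) + (if shift n 1 i \<in> C then 1 else 0) + (if shift n (-1) i \<in> C then 1 else 0))"
    by (rule sum.cong) auto
  also have "\<dots> = int d * (2*M - 2) + int (card A) + int (card A')"
    unfolding A_def A'_def sum.distrib sum_ind by simp
  finally have sumb2: "(\<Sum>i<d. h (shift n 1 i) + h (shift n (-1) i)) \<le> int d * (2*M - 2) + int (card A) + int (card A')" .
  have eqs: "C \<inter> nbrs d n = shift n 1 ` A \<union> shift n (-1) ` A'"
    unfolding nbrs_def A_def A'_def by auto
  have "card (C \<inter> nbrs d n) = card A + card A'"
    unfolding eqs
  proof (subst card_Un_disjoint)
    show "finite (shift n 1 ` A)" "finite (shift n (- 1) ` A')" unfolding A_def A'_def by auto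
    show "shift n 1 ` A \<inter> shift n (- 1) ` A' = {}" using shift_ne by blast
    have "inj_on (shift n 1) A" by (rule inj_onI) (auto dest: shift_inj)
    moreover have "inj_on (shift n (-1)) A'" by (rule inj_onI) (auto dest: shift_inj)
    ultimately show "card (shift n 1 ` A) + card (shift n (- 1) ` A') = card A + card A'"
      by (simp add: card_image)
  qed
  hence NFeq: "int (NF d C n) = int (card A) + int (card A')" by (simp add: NF_def)
  have "\<forall>n\<in>lattice d. 0 \<le> v n + f_act d \<gamma> h n \<and> v n + f_act d \<gamma> h n \<le> \<gamma> - 1"
    using conjunct1[OF assms(6)[unfolded R_inf_def mem_Collect_eq]] by simp
  hence wle: "v n + f_act d \<gamma> h n \<le> \<gamma> - 1" using nL by blast
  have hn: "h n = M" using hC nC by simp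
  have Mpos: "M \<ge> 1" using assms(5) M_def by simp
  have "(\<gamma> - 2 * int d) * M \<ge> (\<gamma> - 2 * int d) * 1"
    using Mpos assms(2) by (intro mult_left_mono) auto
  moreover have "f_act d \<gamma> h n = \<gamma> * M - (\<Sum>i<d. h (shift n 1 i) + h (shift n (-1) i))"
    unfolding f_act_def hn ..
  ultimately have "v n + f_act d \<gamma> h n \<ge> \<gamma>"
    using vn NFeq sumb2 by (simp add: algebra_simps)
  with wle show False by simp
qed

end
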